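(* For any sequence $(\mu_n)_{n\ge1}$ with $\mu_n\in\mathbb{R}^{\mathbb{L}_n}$ (regarded as an element of $\mathbb{R}^{\mathbb{T}_n}$ vanishing off $\mathbb{L}_n$), the law of $h$ under ${\rm P}_n$ and the law of $h+\mu_n$ under ${\rm P}_n^+$ are asymptotically mutually singular: there exist measurable sets $A_n\subset\mathbb{R}^{\mathbb{T}_n}$ such that $$\lim_{n\to\infty}{\rm P}_n(h\in A_n)=1,\qquad\lim_{n\to\infty}{\rm P}_n^+(h+\mu_n\in A_n)=0.$$
   Context: $\mathbb{T}$ is the infinite rooted binary tree with root $0$; $|x|$ is the depth of $x$ and $x\wedge y$ the deepest common ancestor of $x,y$; $\mathbb{T}_n$, $\mathbb{L}_n$ are the vertices of depth at most / exactly $n$. $h$ is the centered Gaussian field on $\mathbb{T}$ with ${\rm E}[h(x)h(y)]=|x\wedge y|$ (binary branching random walk with standard Gaussian steps, $h(0)=0$); ${\rm P}_n$ is its law on $\mathbb{R}^{\mathbb{T}_n}$, and ${\rm P}_n^+={\rm P}_n(\cdot\mid h(x)\ge0\ \forall x\in\mathbb{L}_n)$. *)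

theory Defs
  imports "HOL-Probability.Probability"
begin

text \<open>Vertices of the infinite rooted binary tree are finite bool lists (the path
from the root); the root is the empty list and the depth is the length.\<close>

type_synonym vertex = "bool list"

definition Tn :: "nat \<Rightarrow> vertex set" where
  "Tn n = {x. length x \<le> n}"

definition Ln :: "nat \<Rightarrow> vertex set" where
  "Ln n = {x. length x = n}"

definition field_space :: "nat \<Rightarrow> (vertex \<Rightarrow> real) measure" where
  "field_space n = PiM (Tn n) (\<lambda>_. borel)"

definition increments :: "nat \<Rightarrow> (vertex \<Rightarrow> real) measure" where
  "increments n = PiM (Tn n - {[]}) (\<lambda>_. density lborel std_normal_density)"

definition brw :: "nat \<Rightarrow> (vertex \<Rightarrow> real) \<Rightarrow> (vertex \<Rightarrow> real)" where
  "brw n g = (\<lambda>x\<in>Tn n. \<Sum>k\<in>{1..length x}. g (take k x))"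

definition Pn :: "nat \<Rightarrow> (vertex \<Rightarrow> real) measure" where
  "Pn n = distr (increments n) (field_space n) (brw n)"

definition pos_event :: "nat \<Rightarrow> (vertex \<Rightarrow> real) set" where
  "pos_event n = {h \<in> space (field_space n). \<forall>x\<in>Ln n. h x \<ge> 0}"

definition Pn_plus :: "nat \<Rightarrow> (vertex \<Rightarrow> real) set \<Rightarrow> real" where
  "Pn_plus n S = measure (Pn n) (S \<inter> pos_event n) / measure (Pn n) (pos_event n)"

definition shift :: "nat \<Rightarrow> (vertex \<Rightarrow> real) \<Rightarrow> (vertex \<Rightarrow> real) \<Rightarrow> (vertex \<Rightarrow> real)" where
  "shift n \<mu> h = (\<lambda>x\<in>Tn n. h x + (if x \<in> Ln n then \<mu> x else 0))"

end

theory Submission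
  imports Defs
begin



abbreviation NN :: "real measure" where "NN \<equiv> density lborel std_normal_density"

lemma prob_NN: "prob_space NN" by (rule prob_space_normal_density) simp

lemma pps: "product_prob_space (\<lambda>_. NN)"
  by (rule product_prob_spaceI) (rule prob_NN)

lemma finite_Tn: "finite (Tn n)"
proof -
  have "Tn n \<subseteq> {xs. set xs \<subseteq> (UNIV::bool set) \<and> length xs \<le> n}" by (auto simp: Tn_def)
  thus ?thesis by (rule finite_subset) (rule finite_lists_length_le, simp)
qed

lemma space_NN[simp]: "space NN = UNIV" by simp
lemma sets_NN[simp]: "sets NN = sets borel" by simp

lemma brw_meas: "brw n \<in> measurable (increments n) (field_space n)"
  unfolding brw_def increments_def field_space_def
proof (rule measurable_restrict)
  fix x assume x: "x \<in> Tn n"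
  show "(\<lambda>g. \<Sum>k\<in>{1..length x}. g (take k x)) \<in> borel_measurable (Pi\<^sub>M (Tn n - {[]}) (\<lambda>_. NN))"
  proof (rule borel_measurable_sum)
    fix k assume k: "k \<in> {1..length x}"
    have "take k x \<in> Tn n - {[]}" using x k by (auto simp: Tn_def)
    then have "(\<lambda>g. g (take k x)) \<in> measurable (Pi\<^sub>M (Tn n - {[]}) (\<lambda>_. NN)) NN"
      by (rule measurable_component_singleton)
    then show "(\<lambda>g. g (take k x)) \<in> borel_measurable (Pi\<^sub>M (Tn n - {[]}) (\<lambda>_. NN))"
      by (simp only: measurable_cong_sets[OF refl sets_NN])
  qed
qed

lemma field_comp: "x \<in> Tn n \<Longrightarrow> (\<lambda>h. h x) \<in> borel_measurable (field_space n)"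
  unfolding field_space_def by (rule measurable_component_singleton)

lemma Ln_sub: "Ln n \<subseteq> Tn n" by (auto simp: Ln_def Tn_def)
lemma Ln_sub': "Ln (n - 1) \<subseteq> Tn n" by (auto simp: Ln_def Tn_def)

lemma finite_Ln: "finite (Ln n)" using finite_Tn Ln_sub by (rule finite_subset[rotated])

lemma field_le_sets: "x \<in> Tn n \<Longrightarrow> {h \<in> space (field_space n). c \<le> h x} \<in> sets (field_space n)"
proof -
  assume x: "x \<in> Tn n"
  have "{h \<in> space (field_space n). c \<le> h x} = (\<lambda>h. h x) -` {c..} \<inter> space (field_space n)" by auto
  also have "\<dots> \<in> sets (field_space n)" using field_comp[OF x] by (rule measurable_sets) simp
  finally show ?thesis .
qed

lemma pos_event_sets: "pos_event n \<in> sets (field_space n)"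
  unfolding pos_event_def using Ln_sub[of n]
  by (intro sets.sets_Collect_finite_All field_le_sets finite_Ln) auto

definition cntset :: "nat \<Rightarrow> real \<Rightarrow> nat \<Rightarrow> (vertex \<Rightarrow> real) set" where
  "cntset n a K = {h \<in> space (field_space n). real K \<le> (\<Sum>y\<in>Ln (n-1). if h y \<le> a then 1 else 0)}"

lemma cntset_sets: "cntset n a K \<in> sets (field_space n)"
proof -
  have [measurable]: "y \<in> Ln (n-1) \<Longrightarrow> (\<lambda>h. h y) \<in> borel_measurable (field_space n)" for y
    using Ln_sub' by (intro field_comp) auto
  show ?thesis unfolding cntset_def by measurable
qed




lemma psf: "product_sigma_finite (\<lambda>_. NN)"
  using pps unfolding product_prob_space_def by auto

lemma fpps: "finite I \<Longrightarrow> finite_product_prob_space (\<lambda>_. NN) I"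
  unfolding finite_product_prob_space_def finite_product_sigma_finite_def finite_product_sigma_finite_axioms_def
  using psf pps by auto

lemma prob_inc: "prob_space (increments n)"
  unfolding increments_def by (intro prob_space_PiM prob_NN)

lemma space_inc: "space (increments n) = PiE (Tn n - {[]}) (\<lambda>_. UNIV)"
  unfolding increments_def by (simp add: space_PiM)

lemma measure_Pn: "S \<in> sets (field_space n) \<Longrightarrow> measure (Pn n) S = measure (increments n) (brw n -` S \<inter> space (increments n))"
  unfolding Pn_def by (rule measure_distr[OF brw_meas]) 

lemma card_Ln: "card (Ln n) = 2^n"
proof -
  have "Ln n = {xs. set xs \<subseteq> (UNIV::bool set) \<and> length xs = n}" by (auto simp: Ln_def)
  then show ?thesis using card_lists_length_eq[of "UNIV::bool set" n] by simp
qed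

lemma card_Tn: "card (Tn k) \<le> 2^(k+1)"
proof -
  have "Tn k = (\<Union>i\<in>{..k}. Ln i)" by (auto simp: Tn_def Ln_def)
  then have "card (Tn k) \<le> (\<Sum>i\<in>{..k}. card (Ln i))" by (simp add: card_UN_le)
  also have "\<dots> = (\<Sum>i<Suc k. 2^i)" by (simp add: card_Ln lessThan_Suc_atMost)
  also have "\<dots> \<le> 2^(k+1)" by (induction k) auto
  finally show ?thesis .
qed

lemma sum_split_bound:
  fixes s :: real and k n :: nat
  assumes "k \<le> n" "n \<le> 2*k" "0 \<le> s"
  shows "0 \<le> (\<Sum>t\<in>{1..n}. if t \<le> k then s else -s)"
proof -
  have "(\<Sum>t\<in>{1..n}. if t \<le> k then s else -s) = (\<Sum>t\<in>{1..n} \<inter> {t. t \<le> k}. s) + (\<Sum>t\<in>{1..n} \<inter> - {t. t \<le> k}. -s)"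
    by (rule sum.If_cases) simp
  also have "{1..n} \<inter> {t. t \<le> k} = {1..k}" using assms by auto
  also have "{1..n} \<inter> - {t. t \<le> k} = {Suc k..n}" by auto
  finally have "(\<Sum>t\<in>{1..n}. if t \<le> k then s else -s) = real k * s - real (n - k) * s" by simp
  moreover have "real (n - k) \<le> real k" using assms by linarith
  ultimately show ?thesis using assms by (simp add: mult_right_mono)
qed

lemma LB:
  assumes kn: "k \<le> n" "n \<le> 2*k" and s: "0 \<le> s"
  shows "(measure NN {s..})^(2^(k+1)) * (measure NN {-s..})^(2^(n+1))
          \<le> measure (increments n) (brw n -` pos_event n \<inter> space (increments n))"
proof -
  let ?I = "Tn n - {[]}"
  define R :: "vertex \<Rightarrow> real set" where "R i = (if length i \<le> k then {s..} else {-s..})" for i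
  let ?r = "measure NN {s..}" and ?u = "measure NN {-s..}"
  have finI: "finite ?I" using finite_Tn by auto
  have box_sub: "PiE ?I R \<subseteq> brw n -` pos_event n \<inter> space (increments n)"
  proof
    fix g assume g: "g \<in> PiE ?I R"
    then have gs: "g \<in> space (increments n)" unfolding space_inc by (auto simp: PiE_iff)
    have "brw n g \<in> space (field_space n)" using measurable_space[OF brw_meas gs] .
    moreover have "0 \<le> brw n g x" if x: "x \<in> Ln n" for x
    proof -
      have xT: "x \<in> Tn n" using x Ln_sub by auto
      have lx: "length x = n" using x by (simp add: Ln_def)
      have "(\<Sum>t\<in>{1..n}. if t \<le> k then s else -s) \<le> (\<Sum>t\<in>{1..n}. g (take t x))"
      proof (rule sum_mono)
        fix t assume t: "t \<in> {1..n}"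
        have tI: "take t x \<in> ?I" using t lx by (auto simp: Tn_def)
        have "g (take t x) \<in> R (take t x)" using g tI by (auto simp: PiE_iff)
        moreover have "length (take t x) = t" using t lx by simp
        ultimately show "(if t \<le> k then s else -s) \<le> g (take t x)" by (cases "t \<le> k") (auto simp: R_def)
      qed
      then have "0 \<le> (\<Sum>t\<in>{1..n}. g (take t x))" using sum_split_bound[OF kn s] by linarith
      moreover have "brw n g x = (\<Sum>t\<in>{1..n}. g (take t x))" unfolding brw_def using xT lx by simp
      ultimately show ?thesis by simp
    qed
    ultimately show "g \<in> brw n -` pos_event n \<inter> space (increments n)" using gs unfolding pos_event_def by blast
  qed
  have mbox: "measure (increments n) (PiE ?I R) = (\<Prod>i\<in>?I. measure NN (R i))"
    unfolding increments_def by (rule finite_product_prob_space.prob_times[OF fpps[OF finI]]) (simp add: R_def)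
  have "(\<Prod>i\<in>?I. measure NN (R i)) = (\<Prod>i\<in>?I \<inter> {i. length i \<le> k}. ?r) * (\<Prod>i\<in>?I \<inter> - {i. length i \<le> k}. ?u)"
    unfolding R_def by (subst prod.If_cases[OF finI, symmetric]) (auto intro!: prod.cong split: if_splits)
  also have "\<dots> = ?r ^ card (?I \<inter> {i. length i \<le> k}) * ?u ^ card (?I \<inter> - {i. length i \<le> k})" by simp
  also have "\<dots> \<ge> ?r^(2^(k+1)) * ?u^(2^(n+1))"
  proof (rule mult_mono)
    have "card (?I \<inter> {i. length i \<le> k}) \<le> card (Tn k)"
      by (rule card_mono[OF finite_Tn]) (auto simp: Tn_def)
    then have "card (?I \<inter> {i. length i \<le> k}) \<le> 2^(k+1)" using card_Tn[of k] by linarith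
    then show "?r^(2^(k+1)) \<le> ?r ^ card (?I \<inter> {i. length i \<le> k})"
      by (intro power_decreasing) (auto simp: prob_space.prob_le_1[OF prob_NN])
    have "card (?I \<inter> - {i. length i \<le> k}) \<le> card (Tn n)"
      by (rule card_mono[OF finite_Tn]) auto
    then have "card (?I \<inter> - {i. length i \<le> k}) \<le> 2^(n+1)" using card_Tn[of n] by linarith
    then show "?u^(2^(n+1)) \<le> ?u ^ card (?I \<inter> - {i. length i \<le> k})"
      by (intro power_decreasing) (auto simp: prob_space.prob_le_1[OF prob_NN])
  qed (auto simp: measure_nonneg)
  finally have "?r^(2^(k+1)) * ?u^(2^(n+1)) \<le> measure (increments n) (PiE ?I R)" using mbox by simp
  also have "\<dots> \<le> measure (increments n) (brw n -` pos_event n \<inter> space (increments n))"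
  proof (rule finite_measure.finite_measure_mono)
    show "finite_measure (increments n)" using prob_inc by (simp add: prob_space_def)
    show "brw n -` pos_event n \<inter> space (increments n) \<in> sets (increments n)"
      by (rule measurable_sets[OF brw_meas pos_event_sets])
  qed (rule box_sub)
  finally show ?thesis .
qed




lemma sum_if_card: "finite F \<Longrightarrow> (\<Sum>y\<in>F. if P y then 1 else (0::real)) = real (card {y\<in>F. P y})"
  by (simp add: sum.If_cases Int_def conj_commute)

lemma measure_NN_UNIV[simp]: "measure NN UNIV = 1"
  using prob_space.prob_space[OF prob_NN] by simp

lemma QS:
  assumes n1: "1 \<le> n"
  shows "measure (increments n) (brw n -` (cntset n a K \<inter> pos_event n) \<inter> space (increments n))
           \<le> (measure NN {-a..})^K"
proof -
  let ?I1 = "Tn (n-1) - {[]}" and ?J = "Ln n"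
  let ?q = "measure NN {-a..}"
  let ?S = "brw n -` (cntset n a K \<inter> pos_event n) \<inter> space (increments n)"
  have IJ: "?I1 \<union> ?J = Tn n - {[]}" using n1 by (auto simp: Tn_def Ln_def)
  have disj: "?I1 \<inter> ?J = {}" using n1 by (auto simp: Tn_def Ln_def)
  have finI1: "finite ?I1" using finite_Tn by auto
  have finJ: "finite ?J" by (rule finite_Ln)
  have Ssets: "?S \<in> sets (increments n)"
    by (rule measurable_sets[OF brw_meas]) (intro sets.Int cntset_sets pos_event_sets)
  have q01: "0 \<le> ?q" "?q \<le> 1" using prob_space.prob_le_1[OF prob_NN] by (auto simp: measure_nonneg)
  define H where "H x y = (\<Sum>t\<in>{1..n-1}. x (take t y))" for x :: "vertex \<Rightarrow> real" and y
  define R where "R x l = (if H x (butlast l) \<le> a then {-a..} else (UNIV :: real set))" for x l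
  have inner: "(\<integral>\<^sup>+ y. indicator ?S (merge ?I1 ?J (x, y)) \<partial>PiM ?J (\<lambda>_. NN)) \<le> ennreal (?q ^ K)"
    if x: "x \<in> space (PiM ?I1 (\<lambda>_. NN))" for x
  proof -
    let ?c = "card {y\<in>Ln (n-1). H x y \<le> a}"
    have brw_int: "brw n (merge ?I1 ?J (x, z)) y = H x y" if y: "y \<in> Ln (n-1)" for z y
    proof -
      have yT: "y \<in> Tn n" using y Ln_sub' by auto
      have ly: "length y = n - 1" using y by (simp add: Ln_def)
      have "brw n (merge ?I1 ?J (x, z)) y = (\<Sum>t\<in>{1..n-1}. merge ?I1 ?J (x, z) (take t y))"
        unfolding brw_def using yT ly by simp
      also have "\<dots> = H x y" unfolding H_def
      proof (rule sum.cong)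
        fix t assume t: "t \<in> {1..n-1}"
        then have "take t y \<in> ?I1" using ly by (auto simp: Tn_def)
        then show "merge ?I1 ?J (x, z) (take t y) = x (take t y)" unfolding merge_def by simp
      qed simp
      finally show ?thesis .
    qed
    have brw_leaf: "brw n (merge ?I1 ?J (x, z)) l = H x (butlast l) + z l" if l: "l \<in> Ln n" for z l
    proof -
      have lT: "l \<in> Tn n" using l Ln_sub by auto
      have ll: "length l = n" using l by (simp add: Ln_def)
      have "brw n (merge ?I1 ?J (x, z)) l = (\<Sum>t\<in>{1..n}. merge ?I1 ?J (x, z) (take t l))"
        unfolding brw_def using lT ll by simp
      also have "{1..n} = insert n {1..n-1}" using n1 by auto
      also have "(\<Sum>t\<in>insert n {1..n-1}. merge ?I1 ?J (x, z) (take t l)) =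
                 merge ?I1 ?J (x, z) (take n l) + (\<Sum>t\<in>{1..n-1}. merge ?I1 ?J (x, z) (take t l))"
        using n1 by (intro sum.insert) auto
      also have "merge ?I1 ?J (x, z) (take n l) = z l" using ll l n1 unfolding merge_def by (auto simp: Tn_def)
      also have "(\<Sum>t\<in>{1..n-1}. merge ?I1 ?J (x, z) (take t l)) = H x (butlast l)" unfolding H_def
      proof (rule sum.cong)
        fix t assume t: "t \<in> {1..n-1}"
        then have "take t l \<in> ?I1" using ll by (auto simp: Tn_def)
        moreover have "take t (butlast l) = take t l" using t ll by (simp add: butlast_conv_take)
        ultimately show "merge ?I1 ?J (x, z) (take t l) = x (take t (butlast l))" unfolding merge_def by simp
      qed simp
      finally show ?thesis by simp
    qed
    show ?thesis
    proof (cases "K \<le> ?c")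
      case False
      have "indicator ?S (merge ?I1 ?J (x, y)) = (0::ennreal)" for y
      proof -
        have "merge ?I1 ?J (x, y) \<notin> ?S"
        proof
          assume "merge ?I1 ?J (x, y) \<in> ?S"
          then have "brw n (merge ?I1 ?J (x, y)) \<in> cntset n a K" by auto
          then have "real K \<le> (\<Sum>y'\<in>Ln (n-1). if brw n (merge ?I1 ?J (x, y)) y' \<le> a then 1 else 0)"
            by (simp add: cntset_def)
          also have "\<dots> = (\<Sum>y'\<in>Ln (n-1). if H x y' \<le> a then 1 else 0)"
            by (rule sum.cong[OF refl]) (simp only: brw_int)
          also have "\<dots> = real ?c" by (rule sum_if_card[OF finite_Ln])
          finally show False using False by simp
        qed
        then show ?thesis by simp
      qed
      then show ?thesis by simp
    next
      case True
      have "(\<integral>\<^sup>+ y. indicator ?S (merge ?I1 ?J (x, y)) \<partial>PiM ?J (\<lambda>_. NN))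
            \<le> (\<integral>\<^sup>+ y. indicator (PiE ?J (R x)) y \<partial>PiM ?J (\<lambda>_. NN))"
      proof (rule nn_integral_mono)
        fix y assume y: "y \<in> space (PiM ?J (\<lambda>_. NN))"
        show "indicator ?S (merge ?I1 ?J (x, y)) \<le> (indicator (PiE ?J (R x)) y :: ennreal)"
        proof (cases "merge ?I1 ?J (x, y) \<in> ?S")
          case True
          then have E: "brw n (merge ?I1 ?J (x, y)) \<in> pos_event n" by auto
          have "y \<in> PiE ?J (R x)"
          proof -
            have "y l \<in> R x l" if l: "l \<in> ?J" for l
            proof -
              have "0 \<le> brw n (merge ?I1 ?J (x, y)) l" using E l by (auto simp: pos_event_def)
              then show ?thesis using brw_leaf[OF l] by (auto simp: R_def)
            qed
            moreover have "y \<in> extensional ?J" using y by (simp add: space_PiM PiE_def)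
            ultimately show ?thesis by (auto simp: PiE_def)
          qed
          then show ?thesis by (simp add: indicator_def)
        qed simp
      qed
      also have "\<dots> = emeasure (PiM ?J (\<lambda>_. NN)) (PiE ?J (R x))"
        by (rule nn_integral_indicator) (auto intro!: sets_PiM_I_finite simp: R_def finJ)
      also have "\<dots> = ennreal (measure (PiM ?J (\<lambda>_. NN)) (PiE ?J (R x)))"
        using prob_space_PiM[OF prob_NN] unfolding prob_space_def by (blast intro: finite_measure.emeasure_eq_measure)
      also have "measure (PiM ?J (\<lambda>_. NN)) (PiE ?J (R x)) = (\<Prod>l\<in>?J. measure NN (R x l))"
        by (rule finite_product_prob_space.prob_times[OF fpps[OF finJ]]) (simp add: R_def)
      also have "\<dots> = (\<Prod>l\<in>?J \<inter> {l. H x (butlast l) \<le> a}. ?q) * (\<Prod>l\<in>?J \<inter> - {l. H x (butlast l) \<le> a}. 1)"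
        unfolding R_def
        by (subst prod.If_cases[OF finJ, symmetric]) (auto intro!: prod.cong split: if_splits)
      also have "\<dots> = ?q ^ card (?J \<inter> {l. H x (butlast l) \<le> a})" by simp
      also have "\<dots> \<le> ?q ^ K"
      proof (rule power_decreasing[OF _ q01])
        have "?c \<le> card (?J \<inter> {l. H x (butlast l) \<le> a})"
        proof (rule card_inj_on_le)
          show "inj_on (\<lambda>y. y @ [True]) {y\<in>Ln (n-1). H x y \<le> a}" by (auto simp: inj_on_def)
          show "(\<lambda>y. y @ [True]) ` {y\<in>Ln (n-1). H x y \<le> a} \<subseteq> ?J \<inter> {l. H x (butlast l) \<le> a}"
            using n1 by (auto simp: Ln_def)
        qed (simp add: finJ)
        then show "K \<le> card (?J \<inter> {l. H x (butlast l) \<le> a})" using True by linarith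
      qed
      finally show ?thesis by (simp add: ennreal_leI)
    qed
  qed
  have "emeasure (increments n) ?S = (\<integral>\<^sup>+ g. indicator ?S g \<partial>PiM (?I1 \<union> ?J) (\<lambda>_. NN))"
    using IJ Ssets by (simp add: increments_def nn_integral_indicator)
  also have "\<dots> = (\<integral>\<^sup>+ x. (\<integral>\<^sup>+ y. indicator ?S (merge ?I1 ?J (x, y)) \<partial>PiM ?J (\<lambda>_. NN)) \<partial>PiM ?I1 (\<lambda>_. NN))"
    by (rule product_sigma_finite.product_nn_integral_fold[OF psf disj finI1 finJ])
       (use IJ Ssets in \<open>simp add: increments_def\<close>)
  also have "\<dots> \<le> (\<integral>\<^sup>+ x. ennreal (?q ^ K) \<partial>PiM ?I1 (\<lambda>_. NN))"
    by (rule nn_integral_mono) (rule inner)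
  also have "\<dots> = ennreal (?q ^ K) * emeasure (PiM ?I1 (\<lambda>_. NN)) (space (PiM ?I1 (\<lambda>_. NN)))"
    by (rule nn_integral_const)
  also have "\<dots> = ennreal (?q ^ K)"
    by (simp only: prob_space.emeasure_space_1[OF prob_space_PiM[OF prob_NN]] mult_1_right)
  finally have "emeasure (increments n) ?S \<le> ennreal (?q ^ K)" .
  then show ?thesis
    using finite_measure.emeasure_eq_measure[OF conjunct1[OF prob_inc[unfolded prob_space_def]]] q01 by simp
qed




lemma uminus_sets: "A \<in> sets borel \<Longrightarrow> uminus -` A \<in> sets (borel :: real measure)"
proof -
  assume A: "A \<in> sets borel"
  have "(uminus :: real \<Rightarrow> real) \<in> borel_measurable borel" by simp
  from measurable_sets[OF this A] show ?thesis by simp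
qed

lemma NN_sym: assumes A: "A \<in> sets borel" shows "emeasure NN (uminus -` A) = emeasure NN A"
proof -
  have mA: "uminus -` A \<in> sets borel" using A by (rule uminus_sets)
  have "emeasure NN (uminus -` A) = (\<integral>\<^sup>+ x. ennreal (std_normal_density x) * indicator (uminus -` A) x \<partial>lborel)"
    using mA by (simp add: emeasure_density)
  also have "\<dots> = (\<integral>\<^sup>+ x. (\<lambda>y. ennreal (std_normal_density y) * indicator A y) (- x) \<partial>lborel)"
    by (intro nn_integral_cong) (simp add: std_normal_density_def indicator_def)
  also have "\<dots> = (\<integral>\<^sup>+ y. ennreal (std_normal_density y) * indicator A y \<partial>distr lborel borel uminus)"
    using A by (subst nn_integral_distr) auto
  also have "\<dots> = emeasure NN A"
    using A by (simp add: lborel_distr_uminus emeasure_density)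
  finally show ?thesis .
qed

definition flip :: "nat \<Rightarrow> nat \<Rightarrow> vertex set \<Rightarrow> (vertex \<Rightarrow> real) \<Rightarrow> (vertex \<Rightarrow> real)" where
  "flip n j T g = (\<lambda>i\<in>Tn n - {[]}. if j < length i \<and> take j i \<in> T then - g i else g i)"

lemma flip_meas: "flip n j T \<in> measurable (increments n) (increments n)"
  unfolding flip_def increments_def
proof (rule measurable_restrict)
  fix i assume i: "i \<in> Tn n - {[]}"
  have c: "(\<lambda>g. g i) \<in> borel_measurable (Pi\<^sub>M (Tn n - {[]}) (\<lambda>_. NN))"
    using measurable_component_singleton[OF i, of "\<lambda>_. NN"] by (simp only: measurable_cong_sets[OF refl sets_NN])
  show "(\<lambda>g. if j < length i \<and> take j i \<in> T then - g i else g i) \<in> measurable (Pi\<^sub>M (Tn n - {[]}) (\<lambda>_. NN)) NN"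
    unfolding measurable_cong_sets[OF refl sets_NN]
  proof -
    have "(\<lambda>g::vertex\<Rightarrow>real. if j < length i \<and> take j i \<in> T then - g i else g i) = (\<lambda>g. (if j < length i \<and> take j i \<in> T then -1 else 1) * g i)"
      by (rule ext) simp
    also have "\<dots> \<in> borel_measurable (Pi\<^sub>M (Tn n - {[]}) (\<lambda>_. NN))"
      by (rule borel_measurable_times[OF borel_measurable_const c])
    finally show "(\<lambda>g. if j < length i \<and> take j i \<in> T then - g i else g i) \<in> borel_measurable (Pi\<^sub>M (Tn n - {[]}) (\<lambda>_. NN))" .
  qed
qed

lemma flip_distr: "distr (increments n) (increments n) (flip n j T) = increments n"
proof -
  let ?I = "Tn n - {[]}"
  have finI: "finite ?I" using finite_Tn by auto
  show ?thesis unfolding increments_def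
  proof (rule product_sigma_finite.PiM_eqI[OF psf finI])
    show "sets (distr (Pi\<^sub>M ?I (\<lambda>_. NN)) (Pi\<^sub>M ?I (\<lambda>_. NN)) (flip n j T)) = sets (Pi\<^sub>M ?I (\<lambda>_. NN))" by simp
    fix A assume A: "\<And>i. i \<in> ?I \<Longrightarrow> A i \<in> sets NN"
    define A' where "A' i = (if j < length i \<and> take j i \<in> T then uminus -` A i else A i)" for i
    have "flip n j T -` PiE ?I A \<inter> space (Pi\<^sub>M ?I (\<lambda>_. NN)) = PiE ?I A'"
    proof (intro equalityI subsetI)
      fix g assume g: "g \<in> flip n j T -` PiE ?I A \<inter> space (Pi\<^sub>M ?I (\<lambda>_. NN))"
      then have ge: "g \<in> extensional ?I" by (simp add: space_PiM PiE_def)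
      have "g i \<in> A' i" if i: "i \<in> ?I" for i
      proof -
        have "flip n j T g i \<in> A i" using g i by (auto simp: PiE_iff)
        then show ?thesis using i by (auto simp: flip_def A'_def)
      qed
      then show "g \<in> PiE ?I A'" using ge by (auto simp: PiE_def)
    next
      fix g assume g: "g \<in> PiE ?I A'"
      then have "g \<in> space (Pi\<^sub>M ?I (\<lambda>_. NN))" by (simp add: space_PiM PiE_def)
      moreover have "flip n j T g \<in> PiE ?I A"
      proof -
        have "flip n j T g i \<in> A i" if i: "i \<in> ?I" for i
        proof -
          have "g i \<in> A' i" using g i by (auto simp: PiE_iff)
          then show ?thesis using i by (auto simp: flip_def A'_def)
        qed
        moreover have "flip n j T g \<in> extensional ?I" by (simp add: flip_def)
        ultimately show ?thesis by (auto simp: PiE_def)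
      qed
      ultimately show "g \<in> flip n j T -` PiE ?I A \<inter> space (Pi\<^sub>M ?I (\<lambda>_. NN))" by simp
    qed
    moreover have "flip n j T \<in> measurable (Pi\<^sub>M ?I (\<lambda>_. NN)) (Pi\<^sub>M ?I (\<lambda>_. NN))"
      using flip_meas[of n j T] by (simp add: increments_def)
    moreover have "PiE ?I A \<in> sets (Pi\<^sub>M ?I (\<lambda>_. NN))" using A by (intro sets_PiM_I_finite finI) auto
    ultimately have "emeasure (distr (Pi\<^sub>M ?I (\<lambda>_. NN)) (Pi\<^sub>M ?I (\<lambda>_. NN)) (flip n j T)) (PiE ?I A)
        = emeasure (Pi\<^sub>M ?I (\<lambda>_. NN)) (PiE ?I A')"
      by (simp add: emeasure_distr)
    also have "\<dots> = (\<Prod>i\<in>?I. emeasure NN (A' i))"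
      using A by (intro product_sigma_finite.emeasure_PiM[OF psf finI]) (auto simp: A'_def uminus_sets)
    also have "\<dots> = (\<Prod>i\<in>?I. emeasure NN (A i))"
      using A by (intro prod.cong refl) (auto simp: A'_def NN_sym)
    finally show "emeasure (distr (Pi\<^sub>M ?I (\<lambda>_. NN)) (Pi\<^sub>M ?I (\<lambda>_. NN)) (flip n j T)) (PiE ?I A)
        = (\<Prod>i\<in>?I. emeasure NN (A i))" .
  qed
qed

lemma flip_measure: "B \<in> sets (increments n) \<Longrightarrow>
   measure (increments n) (flip n j T -` B \<inter> space (increments n)) = measure (increments n) B"
  using measure_distr[OF flip_meas, of B n j T] flip_distr[of n j T] by simp




lemma inc_comp[measurable]: "(\<lambda>g. g i) \<in> borel_measurable (increments n)"
proof (cases "i \<in> Tn n - {[]}")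
  case True
  then show ?thesis unfolding increments_def
    using measurable_component_singleton[OF True, of "\<lambda>_. NN"] by (simp only: measurable_cong_sets[OF refl sets_NN])
next
  case False
  have "g i = undefined" if "g \<in> space (increments n)" for g
    using that False unfolding space_inc PiE_def extensional_def by blast
  then show ?thesis by (subst measurable_cong[where g="\<lambda>g. undefined"]) auto
qed

definition Yz :: "nat \<Rightarrow> nat \<Rightarrow> vertex \<Rightarrow> vertex set" where
  "Yz n j z = {y \<in> Ln (n-1). take j y = z}"
definition rel :: "nat \<Rightarrow> nat \<Rightarrow> vertex \<Rightarrow> (vertex \<Rightarrow> real) \<Rightarrow> real" where
  "rel n j y g = (\<Sum>t\<in>{Suc j..n-1}. g (take t y))"
definition upc :: "nat \<Rightarrow> nat \<Rightarrow> vertex \<Rightarrow> (vertex \<Rightarrow> real) \<Rightarrow> real" where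
  "upc n j z g = (\<Sum>y\<in>Yz n j z. if rel n j y g < 0 then 1 else 0)"
definition dnc :: "nat \<Rightarrow> nat \<Rightarrow> vertex \<Rightarrow> (vertex \<Rightarrow> real) \<Rightarrow> real" where
  "dnc n j z g = (\<Sum>y\<in>Yz n j z. if 0 < rel n j y g then 1 else 0)"
definition Bset :: "nat \<Rightarrow> nat \<Rightarrow> (vertex \<Rightarrow> real) set" where
  "Bset n j = {g \<in> space (increments n). \<forall>z\<in>Ln j. upc n j z g < dnc n j z g}"

lemma finite_Yz: "finite (Yz n j z)" unfolding Yz_def using finite_Ln by simp

lemma Bset_sets: "Bset n j \<in> sets (increments n)"
proof -
  have [simp]: "finite (Yz n j z)" for z by (rule finite_Yz)
  have "Bset n j = {g \<in> space (increments n). \<forall>z\<in>Ln j. upc n j z g < dnc n j z g}" by (simp add: Bset_def)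
  also have "\<dots> \<in> sets (increments n)"
  proof (intro sets.sets_Collect_finite_All finite_Ln)
    fix z
    have [measurable]: "(\<lambda>g. rel n j y g) \<in> borel_measurable (increments n)" for y
      unfolding rel_def by measurable
    show "{g \<in> space (increments n). upc n j z g < dnc n j z g} \<in> sets (increments n)"
      unfolding upc_def dnc_def by measurable
  qed
  finally show ?thesis .
qed

lemma rel_flip: assumes y: "y \<in> Yz n j z"
  shows "rel n j y (flip n j T g) = (if z \<in> T then - rel n j y g else rel n j y g)"
proof -
  have ly: "length y = n - 1" and tz: "take j y = z" using y by (auto simp: Yz_def Ln_def)
  have "flip n j T g (take t y) = (if z \<in> T then - g (take t y) else g (take t y))" if t: "t \<in> {Suc j..n-1}" for t
  proof -
    have "take t y \<in> Tn n - {[]}" using t ly by (auto simp: Tn_def)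
    moreover have "j < length (take t y)" using t ly by auto
    moreover have "take j (take t y) = z" using t tz by (simp add: min_def)
    ultimately show ?thesis by (simp add: flip_def)
  qed
  then show ?thesis unfolding rel_def by (auto simp: sum_negf intro: sum.cong)
qed

lemma flip_disj:
  assumes T: "T \<subseteq> Ln j" and T': "T' \<subseteq> Ln j" and ne: "T \<noteq> T'"
  shows "(flip n j T -` Bset n j \<inter> space (increments n)) \<inter> (flip n j T' -` Bset n j \<inter> space (increments n)) = {}"
proof (rule ccontr)
  assume "\<not> ?thesis"
  then obtain g where gT: "flip n j T g \<in> Bset n j" and gT': "flip n j T' g \<in> Bset n j" by auto
  obtain z where z: "z \<in> Ln j" "(z \<in> T) \<noteq> (z \<in> T')" using T T' ne by blast
  let ?w = "flip n j T g" and ?w' = "flip n j T' g"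
  have rr: "rel n j y ?w = - rel n j y ?w'" if y: "y \<in> Yz n j z" for y
    using z(2) by (auto simp: rel_flip[OF y])
  have "upc n j z ?w = dnc n j z ?w'" unfolding upc_def dnc_def
    by (rule sum.cong) (auto simp: rr)
  moreover have "dnc n j z ?w = upc n j z ?w'" unfolding upc_def dnc_def
    by (rule sum.cong) (auto simp: rr)
  moreover have "upc n j z ?w < dnc n j z ?w" using gT z(1) by (auto simp: Bset_def)
  moreover have "upc n j z ?w' < dnc n j z ?w'" using gT' z(1) by (auto simp: Bset_def)
  ultimately show False by linarith
qed

lemma Bbound: "measure (increments n) (Bset n j) \<le> 1 / 2^(2^j)"
proof -
  interpret G: prob_space "increments n" by (rule prob_inc)
  let ?D = "\<lambda>T. flip n j T -` Bset n j \<inter> space (increments n)"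
  have Dsets: "?D T \<in> sets (increments n)" for T
    by (rule measurable_sets[OF flip_meas Bset_sets])
  have "(\<Sum>T\<in>Pow (Ln j). measure (increments n) (?D T)) = measure (increments n) (\<Union>T\<in>Pow (Ln j). ?D T)"
  proof (rule G.finite_measure_finite_Union[symmetric])
    show "finite (Pow (Ln j))" using finite_Ln by simp
    show "?D ` Pow (Ln j) \<subseteq> G.events" using Dsets by auto
    show "disjoint_family_on ?D (Pow (Ln j))"
      unfolding disjoint_family_on_def using flip_disj by blast
  qed
  also have "\<dots> \<le> 1" by (rule G.prob_le_1)
  finally have "(\<Sum>T\<in>Pow (Ln j). measure (increments n) (?D T)) \<le> 1" .
  moreover have "(\<Sum>T\<in>Pow (Ln j). measure (increments n) (?D T)) = 2^(2^j) * measure (increments n) (Bset n j)"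
    using card_Pow[OF finite_Ln[of j]] by (simp add: flip_measure[OF Bset_sets] card_Ln)
  ultimately show ?thesis by (simp add: field_simps)
qed




definition Fs :: "nat \<Rightarrow> nat \<Rightarrow> real \<Rightarrow> (vertex \<Rightarrow> real) set" where
  "Fs n j b = {g \<in> space (increments n). \<exists>i\<in>(Tn n - {[]}) \<inter> {i. length i \<le> j}. b < g i}"

lemma coord_sets: "{g \<in> space (increments n). b < g i} \<in> sets (increments n)"
  by measurable

lemma Fs_sets: "Fs n j b \<in> sets (increments n)"
  unfolding Fs_def using finite_Tn[of n]
  by (intro sets.sets_Collect_finite_Ex coord_sets) auto

lemma coord_measure: assumes i: "i \<in> Tn n - {[]}"
  shows "measure (increments n) {g \<in> space (increments n). b < g i} = measure NN {b<..}"
proof -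
  have "emeasure (increments n) {g \<in> space (increments n). g i \<in> {b<..}} = emeasure NN {b<..}"
    unfolding increments_def by (rule product_prob_space.emeasure_PiM_Collect_single[OF pps i]) simp
  then show ?thesis by (simp add: measure_def)
qed

lemma Fs_bound: "measure (increments n) (Fs n j b) \<le> 2^(j+1) * measure NN {b<..}"
proof -
  interpret G: prob_space "increments n" by (rule prob_inc)
  let ?K = "(Tn n - {[]}) \<inter> {i. length i \<le> j}"
  have finK: "finite ?K" using finite_Tn[of n] by auto
  have eqF: "Fs n j b = (\<Union>i\<in>?K. {g \<in> space (increments n). b < g i})" unfolding Fs_def by blast
  have sub: "(\<lambda>i. {g \<in> space (increments n). b < g i}) ` ?K \<subseteq> sets (increments n)"
    using coord_sets by blast
  have "measure (increments n) (Fs n j b) \<le> (\<Sum>i\<in>?K. measure (increments n) {g \<in> space (increments n). b < g i})"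
    unfolding eqF using G.finite_measure_subadditive_finite[OF finK sub] .
  also have "\<dots> = (\<Sum>i\<in>?K. measure NN {b<..})"
    by (rule sum.cong[OF refl]) (rule coord_measure, blast)
  also have "\<dots> = real (card ?K) * measure NN {b<..}" by simp
  also have "\<dots> \<le> 2^(j+1) * measure NN {b<..}"
  proof (rule mult_right_mono)
    have "card ?K \<le> card (Tn j)" by (rule card_mono[OF finite_Tn]) (auto simp: Tn_def)
    then have "card ?K \<le> 2^(j+1)" using card_Tn[of j] by linarith
    then have "real (card ?K) \<le> real (2^(j+1))" by (rule of_nat_mono)
    then show "real (card ?K) \<le> 2^(j+1)" by simp
  qed (simp add: measure_nonneg)
  finally show ?thesis .
qed

lemma card_Yz: assumes z: "z \<in> Ln j" and jn: "j \<le> n - 1" shows "card (Yz n j z) = 2^(n-1-j)"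
proof -
  have "Yz n j z = (\<lambda>w. z @ w) ` Ln (n-1-j)"
  proof (intro equalityI subsetI)
    fix y assume y: "y \<in> Yz n j z"
    then have "take j y = z" by (simp add: Yz_def)
    then have "y = z @ drop j y" by (metis append_take_drop_id)
    moreover have "drop j y \<in> Ln (n-1-j)" using y z by (auto simp: Yz_def Ln_def)
    ultimately show "y \<in> (\<lambda>w. z @ w) ` Ln (n-1-j)" by blast
  next
    fix y assume "y \<in> (\<lambda>w. z @ w) ` Ln (n-1-j)"
    then show "y \<in> Yz n j z" using z jn by (auto simp: Yz_def Ln_def)
  qed
  moreover have "inj_on (\<lambda>w. z @ w) (Ln (n-1-j))" by (auto simp: inj_on_def)
  ultimately show ?thesis by (simp add: card_image card_Ln)
qed

lemma cover:
  assumes jn: "j + 2 \<le> n" and g: "g \<in> space (increments n)" and nF: "g \<notin> Fs n j b" and nB: "g \<notin> Bset n j"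
  shows "brw n g \<in> cntset n (real j * b) (2^(n-2-j))"
proof -
  obtain z where z: "z \<in> Ln j" and du: "dnc n j z g \<le> upc n j z g" using g nB by (auto simp: Bset_def not_less)
  have fY: "finite (Yz n j z)" by (rule finite_Yz)
  have key: "brw n g y \<le> real j * b + rel n j y g" if y: "y \<in> Yz n j z" for y
  proof -
    have ly: "length y = n - 1" and yL: "y \<in> Ln (n-1)" using y by (auto simp: Yz_def Ln_def)
    have yT: "y \<in> Tn n" using yL Ln_sub' by auto
    have "brw n g y = (\<Sum>t\<in>{1..n-1}. g (take t y))" unfolding brw_def using yT ly by simp
    also have "{1..n-1} = {1..j} \<union> {Suc j..n-1}" using jn by auto
    also have "(\<Sum>t\<in>{1..j} \<union> {Suc j..n-1}. g (take t y)) = (\<Sum>t\<in>{1..j}. g (take t y)) + rel n j y g"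
      unfolding rel_def by (rule sum.union_disjoint) auto
    also have "(\<Sum>t\<in>{1..j}. g (take t y)) \<le> (\<Sum>t\<in>{1..j}. b)"
    proof (rule sum_mono)
      fix t assume t: "t \<in> {1..j}"
      have "take t y \<in> (Tn n - {[]}) \<inter> {i. length i \<le> j}" using t ly jn by (auto simp: Tn_def)
      then show "g (take t y) \<le> b" using nF g by (auto simp: Fs_def not_less)
    qed
    finally show ?thesis by simp
  qed
  have "real (2^(n-2-j)) = card (Yz n j z) / 2"
  proof -
    have "card (Yz n j z) = 2^(n-1-j)" using card_Yz[OF z] jn by simp
    moreover have "n-1-j = Suc (n-2-j)" using jn by arith
    then have "(2::nat)^(n-1-j) = 2 * 2^(n-2-j)" by simp
    ultimately show ?thesis by simp
  qed
  also have "\<dots> \<le> (\<Sum>y\<in>Yz n j z. if rel n j y g \<le> 0 then 1 else 0)"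
  proof -
    have s1: "(\<Sum>y\<in>Yz n j z. if rel n j y g \<le> 0 then 1 else (0::real)) = card (Yz n j z) - dnc n j z g"
    proof -
      have "(\<Sum>y\<in>Yz n j z. if rel n j y g \<le> 0 then 1 else (0::real)) = (\<Sum>y\<in>Yz n j z. 1 - (if 0 < rel n j y g then 1 else 0))"
        by (rule sum.cong) auto
      also have "\<dots> = card (Yz n j z) - dnc n j z g" by (simp add: sum_subtractf dnc_def)
      finally show ?thesis .
    qed
    have "upc n j z g + dnc n j z g = (\<Sum>y\<in>Yz n j z. (if rel n j y g < 0 then 1 else 0) + (if 0 < rel n j y g then 1 else 0))"
      unfolding upc_def dnc_def by (simp add: sum.distrib)
    also have "\<dots> \<le> (\<Sum>y\<in>Yz n j z. 1)" by (rule sum_mono) auto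
    finally have "upc n j z g + dnc n j z g \<le> card (Yz n j z)" by simp
    then show ?thesis using s1 du by linarith
  qed
  also have "\<dots> \<le> (\<Sum>y\<in>Yz n j z. if brw n g y \<le> real j * b then 1 else 0)"
    by (rule sum_mono) (use key in \<open>fastforce\<close>)
  also have "\<dots> \<le> (\<Sum>y\<in>Ln (n-1). if brw n g y \<le> real j * b then 1 else 0)"
    by (rule sum_mono2[OF finite_Ln]) (auto simp: Yz_def)
  finally show ?thesis
    using measurable_space[OF brw_meas g] by (simp add: cntset_def)
qed

lemma PS:
  assumes jn: "j + 2 \<le> n"
  shows "1 - 2^(j+1) * measure NN {b<..} - 1 / 2^(2^j) \<le> measure (Pn n) (cntset n (real j * b) (2^(n-2-j)))"
proof -
  interpret G: prob_space "increments n" by (rule prob_inc)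
  let ?A = "cntset n (real j * b) (2^(n-2-j))"
  let ?P = "brw n -` ?A \<inter> space (increments n)"
  have Psets: "?P \<in> sets (increments n)" by (rule measurable_sets[OF brw_meas cntset_sets])
  have "space (increments n) - ?P \<subseteq> Fs n j b \<union> Bset n j"
  proof
    fix g assume g: "g \<in> space (increments n) - ?P"
    show "g \<in> Fs n j b \<union> Bset n j"
    proof (rule ccontr)
      assume "g \<notin> Fs n j b \<union> Bset n j"
      then have "brw n g \<in> ?A" using cover[OF jn] g by blast
      then show False using g by blast
    qed
  qed
  then have "measure (increments n) (space (increments n) - ?P) \<le> measure (increments n) (Fs n j b \<union> Bset n j)"
    by (intro G.finite_measure_mono sets.Un Fs_sets Bset_sets)
  also have "\<dots> \<le> measure (increments n) (Fs n j b) + measure (increments n) (Bset n j)"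
    by (intro measure_Un_le Fs_sets Bset_sets)
  also have "\<dots> \<le> 2^(j+1) * measure NN {b<..} + 1 / 2^(2^j)"
    using Fs_bound Bbound by (rule add_mono)
  finally have "measure (increments n) (space (increments n) - ?P) \<le> 2^(j+1) * measure NN {b<..} + 1 / 2^(2^j)" .
  moreover have "measure (increments n) (space (increments n) - ?P) = 1 - measure (increments n) ?P"
    using G.finite_measure_compl[OF Psets] G.prob_space by simp
  moreover have "measure (Pn n) ?A = measure (increments n) ?P" by (rule measure_Pn[OF cntset_sets])
  ultimately show ?thesis by linarith
qed




lemma NN_pos: assumes A: "A \<in> sets borel" and pos: "emeasure lborel A > 0" shows "measure NN A > 0"
proof -
  have "emeasure NN A \<noteq> 0"
  proof
    assume "emeasure NN A = 0"
    then have "(\<integral>\<^sup>+ x. ennreal (std_normal_density x) * indicator A x \<partial>lborel) = 0"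
      using A by (simp add: emeasure_density)
    then have "AE x in lborel. ennreal (std_normal_density x) * indicator A x = 0"
      using A by (subst nn_integral_0_iff_AE[symmetric]) auto
    moreover have "ennreal (std_normal_density x) * indicator A x = 0 \<longrightarrow> x \<notin> A" for x
    proof -
      have "std_normal_density x > 0" by (rule normal_density_pos) simp
      then show ?thesis by (auto simp: indicator_def)
    qed
    ultimately have "AE x in lborel. x \<notin> A" by (rule AE_mp[OF _ AE_I2])
    then have "emeasure lborel A = 0" using A by (subst AE_iff_measurable[symmetric]) auto
    then show False using pos by simp
  qed
  moreover have "emeasure NN A = ennreal (measure NN A)"
    using prob_NN unfolding prob_space_def by (blast intro: finite_measure.emeasure_eq_measure)
  ultimately have "measure NN A \<noteq> 0" by auto
  then show ?thesis using measure_nonneg[of NN A] by linarith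
qed

lemma NN_Ici_pos: "measure NN {x..} > 0"
proof (rule NN_pos)
  have "emeasure lborel {x..x+1} \<le> emeasure lborel {x..}" by (rule emeasure_mono) auto
  then have h: "1 \<le> emeasure lborel {x..}" by simp
  show "emeasure lborel {x..} > 0" by (rule less_le_trans[OF _ h]) simp
qed simp

lemma NN_Ici_lt1: "measure NN {x..} < 1"
proof -
  have "measure NN {..<x} > 0"
  proof (rule NN_pos)
    have "emeasure lborel {x-1..x} \<le> emeasure lborel {..<x} + emeasure lborel {x}"
      by (rule order.trans[OF emeasure_mono emeasure_subadditive]) auto
    then have h: "1 \<le> emeasure lborel {..<x}" by simp
    show "emeasure lborel {..<x} > 0" by (rule less_le_trans[OF _ h]) simp
  qed simp
  moreover have "measure NN {..<x} = 1 - measure NN {x..}"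
  proof -
    have "{..<x} = space NN - {x..}" by auto
    then show ?thesis using prob_space.prob_compl[OF prob_NN, of "{x..}"] by simp
  qed
  ultimately show ?thesis by simp
qed

lemma NN_tail_lim: "(\<lambda>b::nat. measure NN {real b<..}) \<longlonglongrightarrow> 0"
proof -
  interpret prob_space NN by (rule prob_NN)
  have "(\<lambda>b::nat. measure NN {real b<..}) \<longlonglongrightarrow> measure NN (\<Inter>b. {real b<..})"
    by (rule finite_Lim_measure_decseq) (auto simp: decseq_def)
  moreover have "(\<Inter>b. {real b<..}) = {}"
  proof -
    have "x \<notin> (\<Inter>b. {real b<..})" for x :: real
    proof -
      obtain b where "x < real b" using reals_Archimedean2[of x] by blast
      then show ?thesis by (auto intro!: exI[of _ b])
    qed
    then show ?thesis by blast
  qed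
  ultimately show ?thesis by simp
qed

lemma NN_Ici_lim: "(\<lambda>s::nat. measure NN {- real s..}) \<longlonglongrightarrow> 1"
proof -
  interpret prob_space NN by (rule prob_NN)
  have "(\<lambda>s::nat. measure NN {- real s..}) \<longlonglongrightarrow> measure NN (\<Union>s. {- real s..})"
    by (rule finite_Lim_measure_incseq) (auto simp: incseq_def)
  moreover have "(\<Union>s. {- real s..}) = UNIV"
  proof -
    have "x \<in> (\<Union>s. {- real s..})" for x :: real
    proof -
      obtain b where "-x < real b" using reals_Archimedean2[of "-x"] by blast
      then show ?thesis by (intro UN_I[of b]) auto
    qed
    then show ?thesis by blast
  qed
  ultimately show ?thesis by simp
qed




lemma diag:
  fixes P Q :: "nat \<Rightarrow> 'a set \<Rightarrow> real" and S :: "nat \<Rightarrow> 'a set set"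
  assumes H: "\<And>e. e > 0 \<Longrightarrow> \<exists>A. (\<forall>n. A n \<in> S n) \<and> (\<exists>N. \<forall>n\<ge>N. 1 - e \<le> P n (A n) \<and> Q n (A n) \<le> e)"
    and P1: "\<And>n A. P n A \<le> 1" and Q0: "\<And>n A. 0 \<le> Q n A"
  shows "\<exists>A. (\<forall>n. A n \<in> S n) \<and> (\<lambda>n. P n (A n)) \<longlonglongrightarrow> 1 \<and> (\<lambda>n. Q n (A n)) \<longlonglongrightarrow> 0"
proof -
  have "\<forall>m. \<exists>A N. (\<forall>n. A n \<in> S n) \<and> (\<forall>n\<ge>N. 1 - 1/(real m+1) \<le> P n (A n) \<and> Q n (A n) \<le> 1/(real m+1))"
  proof
    fix m
    have "1/(real m+1) > 0" by simp
    from H[OF this] show "\<exists>A N. (\<forall>n. A n \<in> S n) \<and> (\<forall>n\<ge>N. 1 - 1/(real m+1) \<le> P n (A n) \<and> Q n (A n) \<le> 1/(real m+1))"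
      by blast
  qed
  then obtain A N where AN: "\<And>m. \<forall>n. A m n \<in> S n"
    "\<And>m n. n \<ge> N m \<Longrightarrow> 1 - 1/(real m+1) \<le> P n (A m n) \<and> Q n (A m n) \<le> 1/(real m+1)"
    by metis
  define M where "M m = m + (\<Sum>i\<le>m. N i)" for m
  have MN: "N m \<le> M m" for m
  proof -
    have "N m \<le> (\<Sum>i\<le>m. N i)" by (rule member_le_sum) auto
    then show ?thesis unfolding M_def by simp
  qed
  have Mm: "m \<le> M m" for m unfolding M_def by simp
  have Mmono: "M m \<le> M m'" if "m \<le> m'" for m m'
    unfolding M_def using that by (intro add_mono sum_mono2) auto
  define J where "J n = Max {m\<in>{..n}. M m \<le> n}" for n
  define B where "B n = (if M 0 \<le> n then A (J n) n else A 0 n)" for n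
  have J: "M (J n) \<le> n" "m \<le> J n" if "M m \<le> n" for m n
  proof -
    have fin: "finite {m\<in>{..n}. M m \<le> n}" by simp
    have mem: "m \<in> {m\<in>{..n}. M m \<le> n}" using that Mm[of m] by auto
    have "J n \<in> {m\<in>{..n}. M m \<le> n}" unfolding J_def using fin mem by (intro Max_in) auto
    then show "M (J n) \<le> n" by simp
    show "m \<le> J n" unfolding J_def using fin mem by (rule Max_ge)
  qed
  have good: "1 - 1/(real (J n)+1) \<le> P n (B n) \<and> Q n (B n) \<le> 1/(real (J n)+1)" if "M 0 \<le> n" for n
  proof -
    have "N (J n) \<le> n" using J(1)[OF that] MN[of "J n"] by linarith
    then show ?thesis using AN(2) that by (simp add: B_def)
  qed
  have small: "\<exists>n0. \<forall>n\<ge>n0. M 0 \<le> n \<and> 1/(real (J n)+1) < e" if e: "e > 0" for e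
  proof -
    obtain m where m: "1/(real m+1) < e"
    proof -
      obtain m where "inverse (real (Suc m)) < e"
        using reals_Archimedean[OF e] by blast
      then have "1/(real m+1) < e" by (simp add: inverse_eq_divide add.commute)
      then show ?thesis by (rule that)
    qed
    show ?thesis
    proof (intro exI[of _ "M m"] allI impI conjI)
      fix n assume n: "M m \<le> n"
      show "M 0 \<le> n" using Mmono[of 0 m] n by simp
      have "m \<le> J n" using J(2)[OF n] .
      then have "1/(real (J n)+1) \<le> 1/(real m+1)" by (intro divide_left_mono) auto
      then show "1/(real (J n)+1) < e" using m by linarith
    qed
  qed
  show ?thesis
  proof (intro exI[of _ B] conjI)
    show "\<forall>n. B n \<in> S n" using AN(1) by (simp add: B_def)
    show "(\<lambda>n. P n (B n)) \<longlonglongrightarrow> 1"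
    proof (rule LIMSEQ_I)
      fix e :: real assume "e > 0"
      then obtain n0 where n0: "\<And>n. n \<ge> n0 \<Longrightarrow> M 0 \<le> n \<and> 1/(real (J n)+1) < e" using small by blast
      show "\<exists>no. \<forall>n\<ge>no. norm (P n (B n) - 1) < e"
      proof (intro exI[of _ n0] allI impI)
        fix n assume "n \<ge> n0"
        then have a: "M 0 \<le> n" and b: "1/(real (J n)+1) < e" using n0 by auto
        have "1 - 1/(real (J n)+1) \<le> P n (B n)" using good[OF a] by simp
        then show "norm (P n (B n) - 1) < e" using b P1[of n "B n"] by (simp only: real_norm_def)
      qed
    qed
    show "(\<lambda>n. Q n (B n)) \<longlonglongrightarrow> 0"
    proof (rule LIMSEQ_I)
      fix e :: real assume "e > 0"
      then obtain n0 where n0: "\<And>n. n \<ge> n0 \<Longrightarrow> M 0 \<le> n \<and> 1/(real (J n)+1) < e" using small by blast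
      show "\<exists>no. \<forall>n\<ge>no. norm (Q n (B n) - 0) < e"
      proof (intro exI[of _ n0] allI impI)
        fix n assume "n \<ge> n0"
        then have a: "M 0 \<le> n" and b: "1/(real (J n)+1) < e" using n0 by auto
        have "Q n (B n) \<le> 1/(real (J n)+1)" using good[OF a] by simp
        then show "norm (Q n (B n) - 0) < e" using b Q0[of n "B n"] by (simp only: real_norm_def)
      qed
    qed
  qed
qed




lemma asym:
  fixes q r u e :: real and j :: nat
  assumes e: "0 < e" and q: "0 < q" "q < 1" and r: "0 < r" and u: "0 < u" and uq: "q \<le> u^(2^(j+4))"
  shows "\<exists>N. \<forall>n\<ge>N. q^(2^(n-2-j)) / (r^(2^(n - n div 2 + 1)) * u^(2^(n+1))) \<le> e"
proof -
  obtain p0 where p0: "q^p0 < r/2" using real_arch_pow_inv[of "r/2" q] r q by auto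
  obtain k0 where k0: "(1/2::real)^k0 < e" using real_arch_pow_inv[of e "1/2"] e by auto
  show ?thesis
  proof (intro exI[of _ "2*(p0 + j + 4 + k0)"] allI impI)
    fix n assume n: "2*(p0 + j + 4 + k0) \<le> n"
    define c where "c = n - 3 - j"
    define p where "p = n div 2 - 4 - j"
    define d where "d = n - n div 2 + 1"
    have h0: "2 * (n div 2) \<le> n" by simp
    have h1: "p0 + j + 4 + k0 \<le> n div 2" using div_le_mono[OF n, of 2] by simp
    have e1: "n - 2 - j = Suc c" using h0 h1 unfolding c_def by linarith
    have e2: "n + 1 = (j + 4) + c" using h0 h1 unfolding c_def by linarith
    have e3: "c = p + d" using h0 h1 unfolding c_def p_def d_def by linarith
    have pp0: "p0 \<le> p" using h1 unfolding p_def by linarith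
    have dk0: "k0 \<le> d" using h0 h1 unfolding d_def by linarith
    have qc: "0 < q^(2^c)" using q by simp
    have "q^(2^(n-2-j)) = (q^(2^c))^2" unfolding e1 by (simp add: power_mult[symmetric] mult.commute)
    moreover have "q^(2^c) \<le> u^(2^(n+1))"
    proof -
      have "q^(2^c) \<le> (u^(2^(j+4)))^(2^c)" by (rule power_mono[OF uq]) (use q in simp)
      also have "\<dots> = u^(2^(n+1))" unfolding e2 by (simp add: power_add power_mult)
      finally show ?thesis .
    qed
    ultimately have "q^(2^(n-2-j)) / (r^(2^d) * u^(2^(n+1))) \<le> (q^(2^c))^2 / (r^(2^d) * q^(2^c))"
    proof -
      assume h1: "q^(2^(n-2-j)) = (q^(2^c))^2" and h2: "q^(2^c) \<le> u^(2^(n+1))"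
      have "r^(2^d) * q^(2^c) \<le> r^(2^d) * u^(2^(n+1))" using h2 r by (intro mult_left_mono) auto
      moreover have "0 < r^(2^d) * q^(2^c)" using r qc by simp
      ultimately show ?thesis unfolding h1 by (intro divide_left_mono) auto
    qed
    also have "\<dots> = q^(2^c) / r^(2^d)" using qc by (simp add: power2_eq_square)
    also have "q^(2^c) = (q^(2^p))^(2^d)" unfolding e3 by (simp add: power_add power_mult)
    also have "q^(2^p) \<le> r/2"
    proof -
      have "p \<le> 2^p" by (rule less_imp_le[OF less_exp])
      then have "p0 \<le> 2^p" using pp0 by linarith
      then have "q^(2^p) \<le> q^p0" using q by (intro power_decreasing) auto
      then show ?thesis using p0 by simp
    qed
    then have "(q^(2^p))^(2^d) \<le> (r/2)^(2^d)" using q by (intro power_mono) auto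
    then have "(q^(2^p))^(2^d) / r^(2^d) \<le> (r/2)^(2^d) / r^(2^d)" using r by (intro divide_right_mono) auto
    also have "\<dots> = (1/2)^(2^d)" using r by (simp add: power_divide)
    also have "\<dots> \<le> (1/2)^k0"
    proof -
      have "d \<le> 2^d" by (rule less_imp_le[OF less_exp])
      then have "k0 \<le> 2^d" using dk0 by linarith
      then show ?thesis by (intro power_decreasing) auto
    qed
    finally show "q^(2^(n-2-j)) / (r^(2^(n - n div 2 + 1)) * u^(2^(n+1))) \<le> e"
      using k0 unfolding d_def by simp
  qed
qed




lemma space_field: "space (field_space n) = PiE (Tn n) (\<lambda>_. UNIV)"
  unfolding field_space_def by (simp add: space_PiM)

lemma shift_cnt: assumes n1: "1 \<le> n"
  shows "{h \<in> space (field_space n). shift n m h \<in> cntset n a K} = cntset n a K"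
proof -
  have key: "shift n m h \<in> cntset n a K \<longleftrightarrow> h \<in> cntset n a K" if h: "h \<in> space (field_space n)" for h
  proof -
    have sp: "shift n m h \<in> space (field_space n)" unfolding space_field shift_def by auto
    have "shift n m h y = h y" if y: "y \<in> Ln (n-1)" for y
    proof -
      have "y \<in> Tn n" "y \<notin> Ln n" using y n1 by (auto simp: Ln_def Tn_def)
      then show ?thesis by (simp add: shift_def)
    qed
    then have "(\<Sum>y\<in>Ln (n-1). if shift n m h y \<le> a then 1 else (0::real)) = (\<Sum>y\<in>Ln (n-1). if h y \<le> a then 1 else 0)"
      by (intro sum.cong) auto
    then show ?thesis using sp h by (simp add: cntset_def)
  qed
  show ?thesis
  proof (intro equalityI subsetI)
    fix h assume "h \<in> {h \<in> space (field_space n). shift n m h \<in> cntset n a K}"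
    then show "h \<in> cntset n a K" using key by blast
  next
    fix h assume h: "h \<in> cntset n a K"
    then have "h \<in> space (field_space n)" by (simp add: cntset_def)
    then show "h \<in> {h \<in> space (field_space n). shift n m h \<in> cntset n a K}" using key h by blast
  qed
qed

lemma Pn_plus_bound:
  assumes n1: "1 \<le> n" and kn: "k \<le> n" "n \<le> 2*k" and s: "0 \<le> s"
    and Dpos: "0 < (measure NN {s..})^(2^(k+1)) * (measure NN {-s..})^(2^(n+1))"
  shows "Pn_plus n (cntset n a K) \<le> (measure NN {-a..})^K / ((measure NN {s..})^(2^(k+1)) * (measure NN {-s..})^(2^(n+1)))"
proof -
  let ?D = "(measure NN {s..})^(2^(k+1)) * (measure NN {-s..})^(2^(n+1))"
  have num: "measure (Pn n) (cntset n a K \<inter> pos_event n) \<le> (measure NN {-a..})^K"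
    using QS[OF n1, of a K] measure_Pn[OF sets.Int[OF cntset_sets pos_event_sets]] by simp
  have den: "?D \<le> measure (Pn n) (pos_event n)"
    using LB[OF kn s] measure_Pn[OF pos_event_sets] by simp
  show ?thesis unfolding Pn_plus_def
    by (rule frac_le) (use num den Dpos measure_nonneg in auto)
qed

lemma main_eps:
  fixes \<mu> :: "nat \<Rightarrow> vertex \<Rightarrow> real" and e :: real
  assumes e: "0 < e"
  shows "\<exists>A. (\<forall>n. A n \<in> sets (field_space n)) \<and>
    (\<exists>N. \<forall>n\<ge>N. 1 - e \<le> measure (Pn n) (A n) \<and> Pn_plus n {h \<in> space (field_space n). shift n (\<mu> n) h \<in> A n} \<le> e)"
proof -
  obtain j where j: "(1/2::real)^j < e/3" using real_arch_pow_inv[of "e/3" "1/2"] e by auto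
  have j': "1 / 2^(2^j) \<le> e/3"
  proof -
    have "j \<le> 2^j" by (rule less_imp_le[OF less_exp])
    then have "(1/2::real)^(2^j) \<le> (1/2)^j" by (intro power_decreasing) auto
    then show ?thesis using j by (simp add: power_divide)
  qed
  have "\<forall>\<^sub>F b in sequentially. measure NN {real b<..} < e/3 / 2^(j+1)"
    by (rule order_tendstoD(2)[OF NN_tail_lim]) (use e in simp)
  then obtain b :: nat where b: "measure NN {real b<..} < e/3 / 2^(j+1)"
    unfolding eventually_sequentially by blast
  have b': "2^(j+1) * measure NN {real b<..} \<le> e/3"
    using b by (simp add: field_simps)
  define a where "a = real j * real b"
  define q where "q = measure NN {-a..}"
  have q: "0 < q" "q < 1" unfolding q_def using NN_Ici_pos NN_Ici_lt1 by auto
  have "(\<lambda>s::nat. (measure NN {- real s..})^(2^(j+4))) \<longlonglongrightarrow> 1^(2^(j+4))"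
    by (rule tendsto_power[OF NN_Ici_lim])
  then have "\<forall>\<^sub>F s in sequentially. q < (measure NN {- real s..})^(2^(j+4))"
    by (rule order_tendstoD(1)) (use q in simp)
  then obtain s :: nat where s: "q < (measure NN {- real s..})^(2^(j+4))"
    unfolding eventually_sequentially by blast
  define r where "r = measure NN {real s..}"
  define u where "u = measure NN {- real s..}"
  have r: "0 < r" and u: "0 < u" unfolding r_def u_def using NN_Ici_pos by auto
  obtain N1 where N1: "\<And>n. n \<ge> N1 \<Longrightarrow> q^(2^(n-2-j)) / (r^(2^(n - n div 2 + 1)) * u^(2^(n+1))) \<le> e"
    using asym[OF e q r u, of j] s unfolding u_def by auto
  define A where "A n = cntset n a (2^(n-2-j))" for n
  show ?thesis
  proof (intro exI[of _ A] conjI allI exI[of _ "max N1 (j+3)"] impI)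
    fix n show "A n \<in> sets (field_space n)" unfolding A_def by (rule cntset_sets)
  next
    fix n assume n: "max N1 (j+3) \<le> n"
    then have jn: "j + 2 \<le> n" and n1: "1 \<le> n" and nN1: "N1 \<le> n" by auto
    have "1 - 2^(j+1) * measure NN {real b<..} - 1 / 2^(2^j) \<le> measure (Pn n) (A n)"
      using PS[OF jn, of "real b"] unfolding A_def a_def .
    then show "1 - e \<le> measure (Pn n) (A n)" using b' j' e by linarith
    let ?k = "n - n div 2"
    have kn: "?k \<le> n" "n \<le> 2 * ?k" by auto
    have Dpos: "0 < r^(2^(?k+1)) * u^(2^(n+1))" using r u by simp
    have "Pn_plus n {h \<in> space (field_space n). shift n (\<mu> n) h \<in> A n} = Pn_plus n (A n)"
      unfolding A_def by (simp only: shift_cnt[OF n1])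
    also have "\<dots> \<le> q^(2^(n-2-j)) / (r^(2^(?k+1)) * u^(2^(n+1)))"
      unfolding A_def q_def r_def u_def
      by (rule Pn_plus_bound[OF n1 kn]) (use Dpos in \<open>simp_all add: r_def u_def\<close>)
    also have "\<dots> \<le> e" using N1[OF nN1] by simp
    finally show "Pn_plus n {h \<in> space (field_space n). shift n (\<mu> n) h \<in> A n} \<le> e" .
  qed
qed

theorem corollary1p19:
  fixes \<mu> :: "nat \<Rightarrow> vertex \<Rightarrow> real"
  shows "\<exists>A :: nat \<Rightarrow> (vertex \<Rightarrow> real) set.
           (\<forall>n. A n \<in> sets (field_space n)) \<and>
           (\<lambda>n. measure (Pn n) (A n)) \<longlonglongrightarrow> 1 \<and>
           (\<lambda>n. Pn_plus n {h \<in> space (field_space n). shift n (\<mu> n) h \<in> A n}) \<longlonglongrightarrow> 0"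
proof (rule diag[where P="\<lambda>n A. measure (Pn n) A" and Q="\<lambda>n A. Pn_plus n {h \<in> space (field_space n). shift n (\<mu> n) h \<in> A}"
      and S="\<lambda>n. sets (field_space n)"])
  fix e :: real assume "0 < e"
  then show "\<exists>A. (\<forall>n. A n \<in> sets (field_space n)) \<and> (\<exists>N. \<forall>n\<ge>N. 1 - e \<le> measure (Pn n) (A n) \<and>
      Pn_plus n {h \<in> space (field_space n). shift n (\<mu> n) h \<in> A n} \<le> e)"
    by (rule main_eps)
next
  fix n and A :: "(vertex \<Rightarrow> real) set"
  have "prob_space (Pn n)" unfolding Pn_def by (rule prob_space.prob_space_distr[OF prob_inc brw_meas])
  then show "measure (Pn n) A \<le> 1" by (rule prob_space.prob_le_1)
next
  fix n and A :: "(vertex \<Rightarrow> real) set"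
  show "0 \<le> Pn_plus n {h \<in> space (field_space n). shift n (\<mu> n) h \<in> A}"
    unfolding Pn_plus_def by (simp add: measure_nonneg)
qed


end
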